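(* Let $E$ and $F$ be Banach spaces, with $E$ infinite-dimensional, having a $K_u$-unconditional basis $\{e_n\}_{n\in\mathbb{N}}$ and an equivalent norm $\|\cdot\|$ that is $C^1$ away from the origin. Let $U\subseteq E$ be open. For every open ball $B_0=B(z_0,r_0)$ with $B(z_0,2r_0)\subseteq U$, every $C^1$ function $f_1:U\to F$, and all numbers $\varepsilon,\eta>0$ with $\sup_{x\in B(z_0,2r_0)}\|Df_1(x)\|<\eta$, there exists a $C^1$ function $\Psi:E\to E$ such that, for $f_2:=f_1\circ\Psi$: (1) $\sup_{x\in B_0}\|f_1(x)-f_2(x)\|<\varepsilon$; (2) $\sup_{x\in B_0}\|Df_2(x)\|<8(K_u)^2\eta$; (3) for every $x\in E$ there exist $n_0\in\mathbb{N}$, a neighbourhood $V_0$ of $x$ and $C^1$ functions $\xi_n,a_n:V_0\to\mathbb{R}$ ($1\le n\le n_0$) such that $$D\Psi(y)(v)=\sum_{n=1}^{n_0}\Big[a_n(y)\,D\|\cdot\|(y-P_{n-1}(y))\big(v-P_{n-1}(v)\big)\,y_n+\xi_n(y)v_n\Big]e_n$$ for every $v=\sum_{n=1}^\infty v_ne_n\in E$ and every $y=\sum_n y_ne_n\in V_0$.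
   Context: $P_n:E\to\operatorname{span}\{e_1,\dots,e_n\}$ denotes the natural projection $P_n(\sum_j x_je_j)=\sum_{j=1}^n x_je_j$, and $P_0=0$. The unconditional constant $K_u$ is the least number such that $\|\sum_{j=1}^n\epsilon_jx_je_j\|\leq K_u\|\sum_{j=1}^nx_je_j\|$ for all signs $\epsilon_j\in\{-1,1\}$ and all finite sums. $D\|\cdot\|(w)$ denotes the derivative of the norm at $w$. *)

theory Defs
  imports "HOL-Analysis.Analysis"
begin

definition schauder_basis :: "(nat \<Rightarrow> 'a::real_normed_vector) \<Rightarrow> bool" where
  "schauder_basis e \<longleftrightarrow>
     (\<forall>x. \<exists>!c::nat \<Rightarrow> real. (\<lambda>n. \<Sum>j<n. c j *\<^sub>R e j) \<longlonglongrightarrow> x)"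

definition coord :: "(nat \<Rightarrow> 'a::real_normed_vector) \<Rightarrow> 'a \<Rightarrow> nat \<Rightarrow> real" where
  "coord e x = (THE c. (\<lambda>n. \<Sum>j<n. c j *\<^sub>R e j) \<longlonglongrightarrow> x)"

definition basis_proj :: "(nat \<Rightarrow> 'a::real_normed_vector) \<Rightarrow> nat \<Rightarrow> 'a \<Rightarrow> 'a" where
  "basis_proj e n x = (\<Sum>j<n. coord e x j *\<^sub>R e j)"

definition uncond_consts :: "(nat \<Rightarrow> 'a::real_normed_vector) \<Rightarrow> real set" where
  "uncond_consts e = {K. \<forall>n (x::nat \<Rightarrow> real) (s::nat \<Rightarrow> real).
      (\<forall>j. s j \<in> {-1, 1}) \<longrightarrow>
      norm (\<Sum>j<n. (s j * x j) *\<^sub>R e j) \<le> K * norm (\<Sum>j<n. x j *\<^sub>R e j)}"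

definition uncond_const :: "(nat \<Rightarrow> 'a::real_normed_vector) \<Rightarrow> real" where
  "uncond_const e = Inf (uncond_consts e)"

definition C1_on :: "'a set \<Rightarrow> ('a::real_normed_vector \<Rightarrow> 'b::real_normed_vector) \<Rightarrow> bool" where
  "C1_on S f \<longleftrightarrow> (\<exists>f' :: 'a \<Rightarrow> ('a \<Rightarrow>\<^sub>L 'b).
      (\<forall>x\<in>S. (f has_derivative blinfun_apply (f' x)) (at x)) \<and> continuous_on S f')"

end

theory Submission
  imports Defs
begin

context fixes e :: "nat \<Rightarrow> 'a::banach" assumes basis: "schauder_basis e"
begin

lemma coord_conv: "(\<lambda>n. basis_proj e n x) \<longlonglongrightarrow> x"
proof -
  from basis have ex: "\<exists>!c::nat \<Rightarrow> real. (\<lambda>n. \<Sum>j<n. c j *\<^sub>R e j) \<longlonglongrightarrow> x"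
    unfolding schauder_basis_def by blast
  show ?thesis unfolding basis_proj_def coord_def using theI'[OF ex] .
qed

lemma coord_unique: "(\<lambda>n. \<Sum>j<n. c j *\<^sub>R e j) \<longlonglongrightarrow> x \<Longrightarrow> coord e x = c"
proof -
  assume h: "(\<lambda>n. \<Sum>j<n. c j *\<^sub>R e j) \<longlonglongrightarrow> x"
  from basis have ex: "\<exists>!c::nat \<Rightarrow> real. (\<lambda>n. \<Sum>j<n. c j *\<^sub>R e j) \<longlonglongrightarrow> x"
    unfolding schauder_basis_def by blast
  show ?thesis unfolding coord_def by (rule the1_equality[OF ex]) (rule h)
qed

lemma e_nonzero: "e j \<noteq> 0"
proof
  assume ej: "e j = 0"
  define c where "c = coord e 0"
  have h: "(\<lambda>n. \<Sum>i<n. c i *\<^sub>R e i) \<longlonglongrightarrow> 0"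
    using coord_conv[of 0] unfolding basis_proj_def c_def .
  have "(\<lambda>n. \<Sum>i<n. (c(j := c j + 1)) i *\<^sub>R e i) = (\<lambda>n. \<Sum>i<n. c i *\<^sub>R e i)"
    by (intro ext sum.cong) (auto simp: ej)
  with h have "coord e 0 = c(j := c j + 1)" by (intro coord_unique) simp
  then have "c = c(j := c j + 1)" by (simp add: c_def)
  then have "c j = c j + 1" by (metis fun_upd_same)
  then show False by simp
qed

lemma coord_add: "coord e (x + y) = (\<lambda>j. coord e x j + coord e y j)"
proof (rule coord_unique)
  have "(\<lambda>n. basis_proj e n x + basis_proj e n y) \<longlonglongrightarrow> x + y"
    by (intro tendsto_add coord_conv)
  then show "(\<lambda>n. \<Sum>j<n. (coord e x j + coord e y j) *\<^sub>R e j) \<longlonglongrightarrow> x + y"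
    by (simp add: basis_proj_def scaleR_add_left sum.distrib)
qed

lemma coord_scale: "coord e (r *\<^sub>R x) = (\<lambda>j. r * coord e x j)"
proof (rule coord_unique)
  have "(\<lambda>n. r *\<^sub>R basis_proj e n x) \<longlonglongrightarrow> r *\<^sub>R x"
    by (intro tendsto_scaleR tendsto_const coord_conv)
  then show "(\<lambda>n. \<Sum>j<n. (r * coord e x j) *\<^sub>R e j) \<longlonglongrightarrow> r *\<^sub>R x"
    by (simp add: basis_proj_def scaleR_sum_right)
qed

lemma mult_fin:
  assumes K: "K \<in> uncond_consts e" and mu: "\<And>j. \<bar>\<mu> j\<bar> \<le> 1"
  shows "norm (\<Sum>j<n. (\<mu> j * x j) *\<^sub>R e j) \<le> K * norm (\<Sum>j<n. x j *\<^sub>R e j)"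
proof -
  have signs: "norm (\<Sum>j<n. (s j * x j) *\<^sub>R e j) \<le> K * norm (\<Sum>j<n. x j *\<^sub>R e j)"
    if "\<forall>j. s j \<in> {-1, 1}" for s
    using K that unfolding uncond_consts_def by blast
  have P: "\<forall>\<mu>. (\<forall>j. \<bar>\<mu> j\<bar> \<le> 1) \<longrightarrow> (\<forall>j\<ge>k. \<mu> j \<in> {-1,1}) \<longrightarrow>
      norm (\<Sum>j<n. (\<mu> j * x j) *\<^sub>R e j) \<le> K * norm (\<Sum>j<n. x j *\<^sub>R e j)" for k
  proof (induction k)
    case 0
    then show ?case using signs by auto
  next
    case (Suc k)
    show ?case
    proof (intro allI impI)
      fix \<mu> :: "nat \<Rightarrow> real"
      assume m1: "\<forall>j. \<bar>\<mu> j\<bar> \<le> 1" and m2: "\<forall>j\<ge>Suc k. \<mu> j \<in> {-1,1}"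
      define a where "a = (1 + \<mu> k) / 2"
      define b where "b = (1 - \<mu> k) / 2"
      have a0: "a \<ge> 0" and b0: "b \<ge> 0" using m1[rule_format, of k] by (auto simp: a_def b_def)
      have ab: "a + b = 1" by (simp add: a_def b_def field_simps)
      let ?p = "\<mu>(k := 1)" and ?m = "\<mu>(k := -1)"
      let ?S = "\<lambda>\<nu>. \<Sum>j<n. (\<nu> j * x j) *\<^sub>R e j"
      have hp: "norm (?S ?p) \<le> K * norm (\<Sum>j<n. x j *\<^sub>R e j)"
        using Suc.IH m1 m2 by (intro Suc.IH[rule_format]) (auto simp: le_Suc_eq)
      have hm: "norm (?S ?m) \<le> K * norm (\<Sum>j<n. x j *\<^sub>R e j)"
        using Suc.IH m1 m2 by (intro Suc.IH[rule_format]) (auto simp: le_Suc_eq)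
      have mu_eq: "\<mu> j = a * ?p j + b * ?m j" for j
        by (cases "j = k") (auto simp: a_def b_def field_simps)
      have "?S \<mu> = a *\<^sub>R ?S ?p + b *\<^sub>R ?S ?m"
        by (subst mu_eq) (simp add: scaleR_sum_right sum.distrib[symmetric] scaleR_add_left
            algebra_simps del: fun_upd_apply)
      then have "norm (?S \<mu>) \<le> a * norm (?S ?p) + b * norm (?S ?m)"
        using a0 b0 by (metis (no_types, lifting) norm_scaleR norm_triangle_ineq abs_of_nonneg)
      also have "\<dots> \<le> a * (K * norm (\<Sum>j<n. x j *\<^sub>R e j)) + b * (K * norm (\<Sum>j<n. x j *\<^sub>R e j))"
        using a0 b0 hp hm by (intro add_mono mult_left_mono) auto
      also have "\<dots> = K * norm (\<Sum>j<n. x j *\<^sub>R e j)" by (metis ab distrib_right mult_1)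
      finally show "norm (?S \<mu>) \<le> K * norm (\<Sum>j<n. x j *\<^sub>R e j)" .
    qed
  qed
  define \<nu> where "\<nu> j = (if j < n then \<mu> j else 1)" for j
  have "norm (\<Sum>j<n. (\<nu> j * x j) *\<^sub>R e j) \<le> K * norm (\<Sum>j<n. x j *\<^sub>R e j)"
    using mu by (intro P[of n, rule_format]) (auto simp: \<nu>_def)
  moreover have "(\<Sum>j<n. (\<nu> j * x j) *\<^sub>R e j) = (\<Sum>j<n. (\<mu> j * x j) *\<^sub>R e j)"
    by (intro sum.cong) (auto simp: \<nu>_def)
  ultimately show ?thesis by simp
qed

lemma sum_tail_eq:
  assumes "m \<le> L"
  shows "(\<Sum>j<L. (if m \<le> j then c j else 0) *\<^sub>R e j) = (\<Sum>j<L. c j *\<^sub>R e j) - (\<Sum>j<m. c j *\<^sub>R e j)"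
proof -
  have u: "{..<L} = {..<m} \<union> {m..<L}" using assms by auto
  have "(\<Sum>j<L. (if m \<le> j then c j else 0) *\<^sub>R e j) = (\<Sum>j\<in>{m..<L}. c j *\<^sub>R e j)"
    by (subst u, subst sum.union_disjoint) auto
  moreover have "(\<Sum>j<L. c j *\<^sub>R e j) = (\<Sum>j<m. c j *\<^sub>R e j) + (\<Sum>j\<in>{m..<L}. c j *\<^sub>R e j)"
    by (subst u, subst sum.union_disjoint) auto
  ultimately show ?thesis by simp
qed

lemma tail_conv: "(\<lambda>L. \<Sum>j<L. (if m \<le> j then coord e y j else 0) *\<^sub>R e j) \<longlonglongrightarrow> y - basis_proj e m y"
proof -
  have "(\<lambda>L. basis_proj e L y - basis_proj e m y) \<longlonglongrightarrow> y - basis_proj e m y"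
    by (intro tendsto_diff coord_conv tendsto_const)
  moreover have "eventually (\<lambda>L. basis_proj e L y - basis_proj e m y =
      (\<Sum>j<L. (if m \<le> j then coord e y j else 0) *\<^sub>R e j)) sequentially"
    unfolding eventually_sequentially basis_proj_def using sum_tail_eq by metis
  ultimately show ?thesis by (rule Lim_transform_eventually)
qed

lemma mult_lim:
  assumes K: "K \<in> uncond_consts e" and mu: "\<And>j. \<bar>\<mu> j\<bar> \<le> 1"
    and lim: "(\<lambda>L. \<Sum>j<L. (\<mu> j * (if m \<le> j then coord e y j else 0)) *\<^sub>R e j) \<longlonglongrightarrow> z"
  shows "norm z \<le> K * norm (y - basis_proj e m y)"
proof (rule LIMSEQ_le)
  show "(\<lambda>L. norm (\<Sum>j<L. (\<mu> j * (if m \<le> j then coord e y j else 0)) *\<^sub>R e j)) \<longlonglongrightarrow> norm z"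
    by (intro tendsto_norm lim)
  show "(\<lambda>L. K * norm (\<Sum>j<L. (if m \<le> j then coord e y j else 0) *\<^sub>R e j)) \<longlonglongrightarrow> K * norm (y - basis_proj e m y)"
    by (intro tendsto_mult tendsto_const tendsto_norm tail_conv)
  show "\<exists>N. \<forall>n\<ge>N. norm (\<Sum>j<n. (\<mu> j * (if m \<le> j then coord e y j else 0)) *\<^sub>R e j)
      \<le> K * norm (\<Sum>j<n. (if m \<le> j then coord e y j else 0) *\<^sub>R e j)"
    by (intro exI[of _ 0] allI impI mult_fin[OF K mu])
qed

lemma proj0[simp]: "basis_proj e 0 y = 0"
  by (simp add: basis_proj_def)

lemma K_ge1: assumes K: "K \<in> uncond_consts e" shows "K \<ge> 1"
proof -
  have "\<forall>n (x::nat\<Rightarrow>real) (s::nat\<Rightarrow>real). (\<forall>j. s j \<in> {-1,1}) \<longrightarrow> norm (\<Sum>j<n. (s j * x j) *\<^sub>R e j) \<le> K * norm (\<Sum>j<n. x j *\<^sub>R e j)"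
    using K unfolding uncond_consts_def by blast
  from this[rule_format, where n=1 and x="\<lambda>_. 1" and s="\<lambda>_. 1"] have "norm (e 0) \<le> K * norm (e 0)" by simp
  moreover have "norm (e 0) > 0" using e_nonzero by simp
  ultimately show ?thesis by simp
qed

lemma K_in: assumes ne: "uncond_consts e \<noteq> {}" shows "uncond_const e \<in> uncond_consts e"
proof -
  let ?S = "uncond_consts e"
  have bdd: "bdd_below ?S" by (rule bdd_belowI[of _ 1]) (rule K_ge1)
  show ?thesis unfolding uncond_const_def
  proof (subst (2) uncond_consts_def, safe)
    fix n and x s :: "nat \<Rightarrow> real"
    assume s: "\<forall>j. s j \<in> {-1, 1}"
    let ?A = "norm (\<Sum>j<n. (s j * x j) *\<^sub>R e j)" and ?B = "norm (\<Sum>j<n. x j *\<^sub>R e j)"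
    have h: "?A \<le> K * ?B" if "K \<in> ?S" for K using that s unfolding uncond_consts_def by blast
    show "?A \<le> Inf ?S * ?B"
    proof (cases "?B = 0")
      case True
      obtain K where "K \<in> ?S" using ne by blast
      with h[OF this] True show ?thesis by simp
    next
      case False
      then have Bp: "?B > 0" by simp
      have "?A / ?B \<le> Inf ?S"
        using Bp h by (intro cInf_greatest ne) (simp add: divide_le_eq mult.commute)
      then show ?thesis using Bp by (simp add: divide_le_eq mult.commute)
    qed
  qed
qed

lemma proj_bound: assumes K: "K \<in> uncond_consts e" shows "norm (basis_proj e n y) \<le> K * norm y"
proof -
  have "(\<lambda>L. \<Sum>j<L. ((if j < n then 1 else 0) * (if 0 \<le> j then coord e y j else 0)) *\<^sub>R e j) \<longlonglongrightarrow> basis_proj e n y"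
  proof (rule Lim_transform_eventually[OF tendsto_const])
    show "\<forall>\<^sub>F L in sequentially. basis_proj e n y = (\<Sum>j<L. ((if j < n then 1 else 0) * (if 0 \<le> j then coord e y j else 0)) *\<^sub>R e j)"
      unfolding eventually_sequentially basis_proj_def
      by (rule exI[of _ n], intro allI impI, rule sum.mono_neutral_cong_left) auto
  qed
  from mult_lim[OF K _ this] show ?thesis by simp
qed

lemma tail_bound: assumes K: "K \<in> uncond_consts e" shows "norm (y - basis_proj e n y) \<le> K * norm y"
proof -
  have "(\<lambda>L. \<Sum>j<L. ((if n \<le> j then 1 else 0) * (if 0 \<le> j then coord e y j else 0)) *\<^sub>R e j) \<longlonglongrightarrow> y - basis_proj e n y"
  proof -
    have "(\<lambda>L. \<Sum>j<L. ((if n \<le> j then 1 else 0) * (if 0 \<le> j then coord e y j else 0)) *\<^sub>R e j)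
       = (\<lambda>L. \<Sum>j<L. (if n \<le> j then coord e y j else 0) *\<^sub>R e j)"
      by (intro ext sum.cong) auto
    then show ?thesis using tail_conv[of n y] by simp
  qed
  from mult_lim[OF K _ this] show ?thesis by simp
qed

lemma coord_bl: assumes ne: "uncond_consts e \<noteq> {}" shows "bounded_linear (\<lambda>x. coord e x j)"
proof (rule bounded_linear_intro)
  define K where "K = uncond_const e"
  have K: "K \<in> uncond_consts e" using K_in[OF ne] by (simp add: K_def)
  show "coord e (x + y) j = coord e x j + coord e y j" for x y by (simp add: coord_add)
  show "coord e (r *\<^sub>R x) j = r *\<^sub>R coord e x j" for r x by (simp add: coord_scale)
  show "norm (coord e x j) \<le> norm x * (2 * K / norm (e j))" for x
  proof -
    have "coord e x j *\<^sub>R e j = basis_proj e (Suc j) x - basis_proj e j x"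
      by (simp add: basis_proj_def)
    then have "norm (coord e x j *\<^sub>R e j) \<le> norm (basis_proj e (Suc j) x) + norm (basis_proj e j x)"
      by (metis norm_triangle_ineq4)
    also have "\<dots> \<le> 2 * K * norm x" using proj_bound[OF K, of "Suc j" x] proj_bound[OF K, of j x] by simp
    finally have "\<bar>coord e x j\<bar> * norm (e j) \<le> 2 * K * norm x" by simp
    moreover have "norm (e j) > 0" using e_nonzero by simp
    ultimately show ?thesis by (simp add: field_simps)
  qed
qed

lemma proj_bl: assumes ne: "uncond_consts e \<noteq> {}" shows "bounded_linear (basis_proj e n)"
  unfolding basis_proj_def
  by (intro bounded_linear_sum bounded_linear_compose[OF bounded_linear_scaleR_left coord_bl[OF ne]])

lemma tailproj_bl: assumes ne: "uncond_consts e \<noteq> {}" shows "bounded_linear (\<lambda>y. y - basis_proj e n y)"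
  by (intro bounded_linear_sub bounded_linear_ident proj_bl[OF ne])

end

lemma C1_sub: "C1_on S f \<Longrightarrow> T \<subseteq> S \<Longrightarrow> C1_on T f"
  unfolding C1_on_def by (meson continuous_on_subset subsetD)

lemma C1_cont: assumes "C1_on S f" shows "continuous_on S f"
proof -
  from assms obtain f' where d: "\<forall>x\<in>S. (f has_derivative blinfun_apply (f' x)) (at x)"
    unfolding C1_on_def by blast
  show ?thesis by (intro continuous_at_imp_continuous_on ballI has_derivative_continuous) (use d in blast)
qed

lemma C1_local:
  assumes "\<And>x. x \<in> S \<Longrightarrow> \<exists>V f'. open V \<and> x \<in> V \<and> (\<forall>y\<in>V. (f has_derivative blinfun_apply (f' y)) (at y))
                 \<and> continuous_on V f'"
  shows "C1_on S f"
proof -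
  define F where "F y = Blinfun (frechet_derivative f (at y))" for y
  have key: "F y = f' y" if "\<forall>y\<in>V. (f has_derivative blinfun_apply (f' y)) (at y)" "y \<in> V" for V f' y
  proof -
    have "blinfun_apply (f' y) = frechet_derivative f (at y)"
      using that by (intro frechet_derivative_at) blast
    then show ?thesis unfolding F_def by (metis blinfun_apply_inverse)
  qed
  show ?thesis unfolding C1_on_def
  proof (intro exI[of _ F] conjI ballI continuous_at_imp_continuous_on)
    fix x assume x: "x \<in> S"
    then obtain V f' where V: "open V" "x \<in> V" "\<forall>y\<in>V. (f has_derivative blinfun_apply (f' y)) (at y)"
      "continuous_on V f'" using assms by blast
    show "(f has_derivative blinfun_apply (F x)) (at x)" using key[OF V(3) V(2)] V by auto
    have "isCont f' x" using V(1,2,4) continuous_on_eq_continuous_at by blast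
    then have "(f' \<longlongrightarrow> F x) (at x)" using key[OF V(3) V(2)] by (simp add: isCont_def)
    then have "(F \<longlongrightarrow> F x) (at x)"
      by (rule Lim_transform_within_open[OF _ V(1) V(2)]) (use key[OF V(3)] in auto)
    then show "isCont F x" by (simp add: isCont_def)
  qed
qed

lemma C1_linear: "bounded_linear L \<Longrightarrow> C1_on S L"
  unfolding C1_on_def
  by (intro exI[of _ "\<lambda>_. Blinfun L"]) (auto simp: bounded_linear_Blinfun_apply bounded_linear_imp_has_derivative)

lemma C1_const: "C1_on S (\<lambda>_. c)"
  unfolding C1_on_def by (intro exI[of _ "\<lambda>_. 0"]) (auto intro: has_derivative_eq_rhs[OF has_derivative_const] simp: zero_blinfun.rep_eq)

lemma C1_add: assumes "C1_on S f" "C1_on S g" shows "C1_on S (\<lambda>x. f x + g x)"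
proof -
  from assms obtain F G where F: "\<forall>x\<in>S. (f has_derivative blinfun_apply (F x)) (at x)" "continuous_on S F"
    and G: "\<forall>x\<in>S. (g has_derivative blinfun_apply (G x)) (at x)" "continuous_on S G"
    unfolding C1_on_def by blast
  show ?thesis unfolding C1_on_def
    by (intro exI[of _ "\<lambda>x. F x + G x"] conjI ballI continuous_on_add F G)
       (auto intro!: has_derivative_eq_rhs[OF has_derivative_add] simp: F G plus_blinfun.rep_eq)
qed

lemma C1_sum: assumes "finite I" "\<And>i. i \<in> I \<Longrightarrow> C1_on S (f i)" shows "C1_on S (\<lambda>x. \<Sum>i\<in>I. f i x)"
  using assms by (induction I rule: finite_induct) (auto intro: C1_add C1_const)

lemma C1_mult: fixes f g :: "'a::real_normed_vector \<Rightarrow> real"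
  assumes "C1_on S f" "C1_on S g" shows "C1_on S (\<lambda>x. f x * g x)"
proof -
  from assms obtain F G where F: "\<forall>x\<in>S. (f has_derivative blinfun_apply (F x)) (at x)" "continuous_on S F"
    and G: "\<forall>x\<in>S. (g has_derivative blinfun_apply (G x)) (at x)" "continuous_on S G"
    unfolding C1_on_def by blast
  have cf: "continuous_on S f" and cg: "continuous_on S g" using assms C1_cont by auto
  show ?thesis unfolding C1_on_def
    by (intro exI[of _ "\<lambda>x. f x *\<^sub>R G x + g x *\<^sub>R F x"] conjI ballI continuous_intros F G cf cg)
       (auto intro!: has_derivative_eq_rhs[OF has_derivative_mult] simp: F G plus_blinfun.rep_eq
          scaleR_blinfun.rep_eq mult.commute)
qed

lemma C1_linear_comp: assumes L: "bounded_linear L" and f: "C1_on S f" shows "C1_on S (\<lambda>x. L (f x))"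
proof -
  from f obtain F where F: "\<forall>x\<in>S. (f has_derivative blinfun_apply (F x)) (at x)" "continuous_on S F"
    unfolding C1_on_def by blast
  show ?thesis unfolding C1_on_def
    by (intro exI[of _ "\<lambda>x. Blinfun L o\<^sub>L F x"] conjI ballI continuous_intros F)
       (auto intro!: has_derivative_eq_rhs[OF has_derivative_compose[of f _ _ _ L]] F(1)[rule_format]
         bounded_linear_imp_has_derivative L simp: bounded_linear_Blinfun_apply[OF L])
qed

lemma C1_real_comp:
  fixes g :: "'a::real_normed_vector \<Rightarrow> real"
  assumes d: "\<And>t. (\<psi> has_real_derivative \<psi>' t) (at t)" and c: "continuous_on UNIV \<psi>'"
    and g: "C1_on S g"
  shows "C1_on S (\<lambda>x. \<psi> (g x))"
proof -
  from g obtain G where G: "\<forall>x\<in>S. (g has_derivative blinfun_apply (G x)) (at x)" "continuous_on S G"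
    unfolding C1_on_def by blast
  have cg: "continuous_on S g" using g C1_cont by auto
  have cc: "continuous_on S (\<lambda>x. \<psi>' (g x))" by (rule continuous_on_compose2[OF c cg]) auto
  show ?thesis unfolding C1_on_def
    by (intro exI[of _ "\<lambda>x. \<psi>' (g x) *\<^sub>R G x"] conjI ballI continuous_intros G cc)
       (auto intro!: has_derivative_eq_rhs[OF has_derivative_compose[of g _ _ _ \<psi>]] G(1)[rule_format]
          d[unfolded has_field_derivative_def] simp: scaleR_blinfun.rep_eq mult.commute)
qed

lemma deriv_split:
  fixes f :: "real \<Rightarrow> real"
  assumes l: "(f has_real_derivative D) (at a within {..a})" and r: "(f has_real_derivative D) (at a within {a..})"
  shows "(f has_real_derivative D) (at a)"
proof -
  have u: "at a = sup (at a within {..a}) (at a within {a..})"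
  proof -
    have "(UNIV::real set) = {..a} \<union> {a..}" by auto
    then have "at a = at a within ({..a} \<union> {a..})" by simp
    then show ?thesis by (simp add: at_within_union)
  qed
  have "((\<lambda>y. (f y - f a) / (y - a)) \<longlongrightarrow> D) (sup (at a within {..a}) (at a within {a..}))"
    using l r unfolding has_field_derivative_iff by (rule filterlim_sup)
  then have "((\<lambda>y. (f y - f a) / (y - a)) \<longlongrightarrow> D) (at a)" using u by simp
  then show ?thesis using has_field_derivative_iff[of f D a UNIV] by simp
qed

lemma piece3:
  fixes p p' :: "real \<Rightarrow> real"
  assumes ab: "a < b" and d: "\<And>t. (p has_real_derivative p' t) (at t)"
    and pa: "p a = L" and pb: "p b = R" and p'a: "p' a = 0" and p'b: "p' b = 0"
  shows "((\<lambda>t. if t \<le> a then L else if b \<le> t then R else p t) has_real_derivative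
          (if t \<le> a then 0 else if b \<le> t then 0 else p' t)) (at t)"
proof -
  let ?f = "\<lambda>t. if t \<le> a then L else if b \<le> t then R else p t"
  consider "t < a" | "t = a" | "a < t \<and> t < b" | "t = b" | "b < t" by linarith
  then show ?thesis
  proof cases
    case 1
    have "((\<lambda>_. L) has_real_derivative 0) (at t)" by (rule DERIV_const)
    then have "(?f has_real_derivative 0) (at t)"
      by (rule has_field_derivative_transform_within_open[of _ _ _ "{..<a}"]) (use 1 in auto)
    then show ?thesis using 1 by simp
  next
    case 5
    have "((\<lambda>_. R) has_real_derivative 0) (at t)" by (rule DERIV_const)
    then have "(?f has_real_derivative 0) (at t)"
      by (rule has_field_derivative_transform_within_open[of _ _ _ "{b<..}"]) (use 5 ab in auto)
    then show ?thesis using 5 ab by simp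
  next
    case 3
    have "(?f has_real_derivative p' t) (at t)"
      by (rule has_field_derivative_transform_within_open[OF d, where S="{a<..<b}"]) (use 3 in auto)
    then show ?thesis using 3 by simp
  next
    case 2
    have "(?f has_real_derivative 0) (at a)"
    proof (rule deriv_split)
      have "((\<lambda>_. L) has_real_derivative 0) (at a within {..a})" by (rule DERIV_const)
      then show "(?f has_real_derivative 0) (at a within {..a})"
        by (rule has_field_derivative_transform_within[of _ _ _ _ 1]) auto
      have "(p has_real_derivative 0) (at a within {a..})" using d[of a] p'a
        by (simp add: has_field_derivative_at_within)
      then show "(?f has_real_derivative 0) (at a within {a..})"
        by (rule has_field_derivative_transform_within[of _ _ _ _ "b - a"]) (use ab pa in \<open>auto simp: dist_real_def\<close>)
    qed
    then show ?thesis using 2 by simp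
  next
    case 4
    have "(?f has_real_derivative 0) (at b)"
    proof (rule deriv_split)
      have "((\<lambda>_. R) has_real_derivative 0) (at b within {b..})" by (rule DERIV_const)
      then show "(?f has_real_derivative 0) (at b within {b..})"
        by (rule has_field_derivative_transform_within[of _ _ _ _ 1]) (use ab in auto)
      have "(p has_real_derivative 0) (at b within {..b})" using d[of b] p'b
        by (simp add: has_field_derivative_at_within)
      then show "(?f has_real_derivative 0) (at b within {..b})"
        by (rule has_field_derivative_transform_within[of _ _ _ _ "b - a"]) (use ab pb in \<open>auto simp: dist_real_def\<close>)
    qed
    then show ?thesis using 4 ab by simp
  qed
qed

definition ss :: "real \<Rightarrow> real" where "ss u = 6*u^5 - 15*u^4 + 10*u^3"
definition ss1 :: "real \<Rightarrow> real" where "ss1 u = 30*u^4 - 60*u^3 + 30*u^2"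
definition ss2 :: "real \<Rightarrow> real" where "ss2 u = 120*u^3 - 180*u^2 + 60*u"

definition phi :: "real \<Rightarrow> real \<Rightarrow> real" where
  "phi d t = (if t \<le> d then 0 else if 2*d \<le> t then 1 else ss ((t - d)/d))"
definition phi1 :: "real \<Rightarrow> real \<Rightarrow> real" where
  "phi1 d t = (if t \<le> d then 0 else if 2*d \<le> t then 0 else ss1 ((t - d)/d) / d)"
definition phi2 :: "real \<Rightarrow> real \<Rightarrow> real" where
  "phi2 d t = (if t \<le> d then 0 else if 2*d \<le> t then 0 else ss2 ((t - d)/d) / d^2)"

context fixes d :: real assumes d: "d > 0"
begin

lemma phi_deriv: "(phi d has_real_derivative phi1 d t) (at t)"
proof -
  have s0: "(ss has_real_derivative ss1 u) (at u)" for u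
    unfolding ss_def ss1_def by (rule derivative_eq_intros refl | simp)+
  have lin: "((\<lambda>t. (t - d)/d) has_real_derivative 1/d) (at t)" for t
    using d by (auto intro!: derivative_eq_intros)
  have dd: "((\<lambda>t. ss ((t - d)/d)) has_real_derivative ss1 ((t - d)/d) / d) (at t)" for t
    using DERIV_chain2[OF s0 lin] by simp
  have "((\<lambda>t. if t \<le> d then 0 else if 2*d \<le> t then 1 else ss ((t - d)/d)) has_real_derivative
          (if t \<le> d then 0 else if 2*d \<le> t then 0 else ss1 ((t - d)/d) / d)) (at t)"
    by (rule piece3[OF _ dd]) (use d in \<open>simp_all add: ss_def ss1_def\<close>)
  then show ?thesis unfolding phi_def[abs_def] phi1_def .
qed

lemma phi1_deriv: "(phi1 d has_real_derivative phi2 d t) (at t)"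
proof -
  have s1: "(ss1 has_real_derivative ss2 u) (at u)" for u
    unfolding ss1_def ss2_def by (rule derivative_eq_intros refl | simp)+
  have lin: "((\<lambda>t. (t - d)/d) has_real_derivative 1/d) (at t)" for t
    using d by (auto intro!: derivative_eq_intros)
  have dd: "((\<lambda>t. ss1 ((t - d)/d) / d) has_real_derivative ss2 ((t - d)/d) / d^2) (at t)" for t
  proof -
    have "((\<lambda>t. ss1 ((t - d)/d) / d) has_real_derivative ss2 ((t - d)/d) * (1/d) / d) (at t)"
      by (intro DERIV_cdivide DERIV_chain2[OF s1 lin])
    then show ?thesis by (simp add: power2_eq_square)
  qed
  have "((\<lambda>t. if t \<le> d then 0 else if 2*d \<le> t then 0 else ss1 ((t - d)/d) / d) has_real_derivative
          (if t \<le> d then 0 else if 2*d \<le> t then 0 else ss2 ((t - d)/d) / d^2)) (at t)"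
    by (rule piece3[OF _ dd]) (use d in \<open>simp_all add: ss1_def ss2_def\<close>)
  then show ?thesis unfolding phi1_def[abs_def] phi2_def .
qed

lemma phi1_cont: "continuous_on UNIV (phi1 d)"
  using phi1_deriv by (meson DERIV_isCont continuous_at_imp_continuous_on)

lemma phi2_cont: "continuous_on UNIV (phi2 d)"
proof -
  have "phi2 d = (\<lambda>t. ss2 ((max d (min (2*d) t) - d)/d) / d^2)"
  proof
    fix t show "phi2 d t = ss2 ((max d (min (2*d) t) - d)/d) / d^2"
      using d by (auto simp: phi2_def ss2_def max_def min_def)
  qed
  then show ?thesis unfolding ss2_def by (simp, intro continuous_intros) (use d in auto)
qed

lemma phi_zero: "t \<le> d \<Longrightarrow> phi d t = 0" by (simp add: phi_def)
lemma phi1_zero: "t \<le> d \<Longrightarrow> phi1 d t = 0" by (simp add: phi1_def)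
lemma phi2_zero: "t \<le> d \<Longrightarrow> phi2 d t = 0" by (simp add: phi2_def)

lemma ss_bounds: assumes "0 \<le> u" "u \<le> 1" shows "0 \<le> ss u" "ss u \<le> 1" "0 \<le> ss1 u" "ss1 u \<le> 2"
proof -
  have q0: "6*u^2 - 15*u + 10 = 6*(u - 5/4)^2 + 5/8" by algebra
  have "0 \<le> 6*(u - 5/4)^2" by simp
  then have q: "6*u^2 - 15*u + 10 > 0" unfolding q0 by linarith
  have "ss u = u^3 * (6*u^2 - 15*u + 10)" unfolding ss_def by algebra
  then show "0 \<le> ss u" using assms q by simp
  have "1 - ss u = (1-u)^3 * (6*u^2 + 3*u + 1)" unfolding ss_def by algebra
  moreover have "(1-u)^3 * (6*u^2 + 3*u + 1) \<ge> 0" using assms by simp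
  ultimately show "ss u \<le> 1" by simp
  have e1: "ss1 u = 30 * (u*(1-u))^2" unfolding ss1_def by algebra
  then show "0 \<le> ss1 u" by simp
  have "1/4 - u*(1-u) = (u - 1/2)^2" by algebra
  moreover have "0 \<le> (u - 1/2)^2" by simp
  ultimately have "u*(1-u) \<le> 1/4" by linarith
  moreover have "0 \<le> u*(1-u)" using assms by simp
  ultimately have "(u*(1-u))^2 \<le> (1/4)^2" by (intro power_mono) auto
  then have "(u*(1-u))^2 \<le> 1/16" by (simp add: power2_eq_square)
  then show "ss1 u \<le> 2" using e1 by linarith
qed

lemma u_range: "d < t \<Longrightarrow> t < 2*d \<Longrightarrow> 0 \<le> (t - d)/d \<and> (t - d)/d \<le> 1"
  using d by (simp add: divide_le_eq)

lemma phi_range: "0 \<le> phi d t" "phi d t \<le> 1"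
  using ss_bounds[of "(t - d)/d"] u_range[of t] by (auto simp: phi_def)

lemma phi_lt1: "phi d t < 1 \<Longrightarrow> t < 2*d"
  using d by (auto simp: phi_def split: if_splits)

lemma phi1_nz: "phi1 d t \<noteq> 0 \<Longrightarrow> t < 2*d"
  by (auto simp: phi1_def split: if_splits)

lemma phi1_bound: "\<bar>phi1 d t\<bar> \<le> 2/d"
proof (cases "d < t \<and> t < 2*d")
  case True
  then have "0 \<le> ss1 ((t - d)/d)" "ss1 ((t - d)/d) \<le> 2" using ss_bounds u_range by auto
  then show ?thesis using True d by (auto simp: phi1_def divide_right_mono)
next
  case False
  then show ?thesis using d by (auto simp: phi1_def)
qed

end

lemma dnorm_bound:
  fixes w :: "'a::real_normed_vector"
  assumes D: "(norm has_derivative D) (at w)"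
  shows "\<bar>D h\<bar> \<le> norm h"
proof -
  have lin: "linear D" using has_derivative_bounded_linear[OF D] bounded_linear.linear by blast
  have l1: "((\<lambda>t::real. w + t *\<^sub>R h) has_derivative (\<lambda>s. s *\<^sub>R h)) (at 0)"
    by (auto intro!: derivative_eq_intros)
  have "((\<lambda>t::real. norm (w + t *\<^sub>R h)) has_derivative (\<lambda>s. D (s *\<^sub>R h))) (at 0)"
    using has_derivative_compose[OF l1, of norm D] D by simp
  moreover have "(\<lambda>s. D (s *\<^sub>R h)) = (\<lambda>s. D h * s)" using lin by (auto simp: linear_scale mult.commute)
  ultimately have "((\<lambda>t::real. norm (w + t *\<^sub>R h)) has_real_derivative D h) (at 0)"
    by (simp add: has_field_derivative_def)
  then have "((\<lambda>y. (norm (w + y *\<^sub>R h) - norm (w + 0 *\<^sub>R h)) / (y - 0)) \<longlongrightarrow> D h) (at 0)"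
    unfolding has_field_derivative_iff by simp
  then have lim: "((\<lambda>y. \<bar>(norm (w + y *\<^sub>R h) - norm w) / y\<bar>) \<longlongrightarrow> \<bar>D h\<bar>) (at 0)"
    by (intro tendsto_rabs) simp
  have "\<bar>(norm (w + y *\<^sub>R h) - norm w) / y\<bar> \<le> norm h" if "y \<noteq> 0" for y
  proof -
    have "\<bar>norm (w + y *\<^sub>R h) - norm w\<bar> \<le> norm (y *\<^sub>R h)"
      by (metis add_diff_cancel_left' norm_triangle_ineq3)
    then have "\<bar>norm (w + y *\<^sub>R h) - norm w\<bar> \<le> \<bar>y\<bar> * norm h" by simp
    then show ?thesis using that by (simp add: abs_divide divide_le_eq mult.commute)
  qed
  then have "eventually (\<lambda>y. \<bar>(norm (w + y *\<^sub>R h) - norm w) / y\<bar> \<le> norm h) (at (0::real))"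
    by (auto simp: eventually_at_filter)
  then show ?thesis using tendsto_le[OF _ tendsto_const lim] by simp
qed

lemma comp_norm_C1:
  fixes Q :: "'a::real_normed_vector \<Rightarrow> 'b::real_normed_vector"
  assumes Q: "bounded_linear Q"
    and nC1: "C1_on (UNIV - {0}) (norm :: 'b \<Rightarrow> real)"
    and dpsi: "\<And>t. (\<psi> has_real_derivative \<psi>' t) (at t)" and cpsi: "continuous_on UNIV \<psi>'"
    and z: "\<And>t. t \<le> \<delta> \<Longrightarrow> \<psi> t = 0" and dp: "\<delta> > 0"
  shows "C1_on UNIV (\<lambda>y. \<psi> (norm (Q y)))"
    and "((\<lambda>y. \<psi> (norm (Q y))) has_derivative
           (\<lambda>v. \<psi>' (norm (Q y)) * frechet_derivative norm (at (Q y)) (Q v))) (at y)"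
proof -
  obtain N where N: "\<And>w::'b. w \<noteq> 0 \<Longrightarrow> (norm has_derivative blinfun_apply (N w)) (at w)"
    and Nc: "continuous_on (UNIV - {0::'b}) N"
    using nC1 unfolding C1_on_def by (metis Diff_iff UNIV_I singletonD)
  have psi'0: "\<psi>' t = 0" if "t < \<delta>" for t
  proof -
    have "((\<lambda>_. 0) has_real_derivative 0) (at t)" by (rule DERIV_const)
    then have "(\<psi> has_real_derivative 0) (at t)"
      by (rule has_field_derivative_transform_within_open[where S="{..<\<delta>}"]) (use that z in auto)
    then show ?thesis using dpsi[of t] DERIV_unique by blast
  qed
  have cQ: "continuous_on UNIV Q" using bounded_linear.continuous_on[OF Q continuous_on_id] by simp
  have oV1: "open {y. Q y \<noteq> 0}"
    by (rule open_Collect_neq) (auto intro: continuous_at_imp_continuous_on linear_continuous_at Q)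
  have oV2: "open {y. norm (Q y) < \<delta>}"
    by (rule open_Collect_less) (auto intro!: continuous_intros cQ)
  have der1: "((\<lambda>y. \<psi> (norm (Q y))) has_derivative (\<lambda>v. \<psi>' (norm (Q y)) * N (Q y) (Q v))) (at y)"
    if "Q y \<noteq> 0" for y
  proof -
    have "((\<lambda>y. norm (Q y)) has_derivative (\<lambda>v. N (Q y) (Q v))) (at y)"
      using has_derivative_compose[OF bounded_linear_imp_has_derivative[OF Q] N[OF that]] by simp
    from has_derivative_compose[OF this dpsi[unfolded has_field_derivative_def]]
    show ?thesis by (simp add: mult.commute)
  qed
  have der2: "((\<lambda>y. \<psi> (norm (Q y))) has_derivative (\<lambda>v. 0)) (at y)" if "norm (Q y) < \<delta>" for y
  proof -
    have "((\<lambda>_. 0::real) has_derivative (\<lambda>v. 0)) (at y)" by (rule has_derivative_const)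
    then show ?thesis
      by (rule has_derivative_transform_within_open[OF _ oV2]) (use that z in auto)
  qed
  show "((\<lambda>y. \<psi> (norm (Q y))) has_derivative
           (\<lambda>v. \<psi>' (norm (Q y)) * frechet_derivative norm (at (Q y)) (Q v))) (at y)"
  proof (cases "Q y = 0")
    case True
    then have "norm (Q y) < \<delta>" using dp by simp
    then show ?thesis using der2 psi'0 by simp
  next
    case False
    have "frechet_derivative norm (at (Q y)) = blinfun_apply (N (Q y))"
      using frechet_derivative_at[OF N[OF False]] by simp
    then show ?thesis using der1[OF False] by simp
  qed
  show "C1_on UNIV (\<lambda>y. \<psi> (norm (Q y)))"
  proof (rule C1_local)
    fix x :: 'a
    show "\<exists>V f'. open V \<and> x \<in> V \<and> (\<forall>y\<in>V. ((\<lambda>y. \<psi> (norm (Q y))) has_derivative blinfun_apply (f' y)) (at y))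
                 \<and> continuous_on V f'"
    proof (cases "Q x = 0")
      case True
      then have "norm (Q x) < \<delta>" using dp by simp
      then show ?thesis
        by (intro exI[of _ "{y. norm (Q y) < \<delta>}"] exI[of _ "\<lambda>_. 0"])
           (auto simp: oV2 zero_blinfun.rep_eq intro: der2)
    next
      case False
      have cN: "continuous_on {y. Q y \<noteq> 0} (\<lambda>y. N (Q y))"
        by (rule continuous_on_compose2[OF Nc continuous_on_subset[OF cQ]]) auto
      have cp: "continuous_on {y. Q y \<noteq> 0} (\<lambda>y. \<psi>' (norm (Q y)))"
        by (rule continuous_on_compose2[OF cpsi]) (auto intro!: continuous_intros continuous_on_subset[OF cQ])
      show ?thesis
        by (intro exI[of _ "{y. Q y \<noteq> 0}"] exI[of _ "\<lambda>y. \<psi>' (norm (Q y)) *\<^sub>R (N (Q y) o\<^sub>L Blinfun Q)"])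
           (use False oV1 der1 cN cp in \<open>auto intro!: continuous_intros
              simp: scaleR_blinfun.rep_eq bounded_linear_Blinfun_apply[OF Q]\<close>)
    qed
  qed
qed

definition tn :: "(nat \<Rightarrow> 'a::banach) \<Rightarrow> nat \<Rightarrow> 'a \<Rightarrow> real" where
  "tn e n y = norm (y - basis_proj e n y)"
definition th :: "(nat \<Rightarrow> 'a::banach) \<Rightarrow> real \<Rightarrow> nat \<Rightarrow> 'a \<Rightarrow> real" where
  "th e d n y = phi d (tn e n y)"
definition Psi :: "(nat \<Rightarrow> 'a::banach) \<Rightarrow> real \<Rightarrow> 'a \<Rightarrow> 'a" where
  "Psi e d y = (\<Sum>n\<in>{n. th e d n y \<noteq> 0}. (th e d n y * coord e y n) *\<^sub>R e n)"
definition GG :: "(nat \<Rightarrow> 'a::banach) \<Rightarrow> real \<Rightarrow> nat \<Rightarrow> 'a \<Rightarrow> 'a" where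
  "GG e d N y = (\<Sum>n<N. (th e d n y * coord e y n) *\<^sub>R e n)"
definition DG :: "(nat \<Rightarrow> 'a::banach) \<Rightarrow> real \<Rightarrow> nat \<Rightarrow> 'a \<Rightarrow> 'a \<Rightarrow> 'a" where
  "DG e d N y v = (\<Sum>n<N. (phi1 d (tn e n y) * frechet_derivative norm (at (y - basis_proj e n y)) (v - basis_proj e n v)
                        * coord e y n + th e d n y * coord e v n) *\<^sub>R e n)"

context
  fixes e :: "nat \<Rightarrow> 'a::banach" and \<delta> :: real
  assumes basis: "schauder_basis e" and ne: "uncond_consts e \<noteq> {}"
    and nC1: "C1_on (UNIV - {0}) (norm :: 'a \<Rightarrow> real)" and dpos: "\<delta> > 0"
begin

lemma Kin: "uncond_const e \<in> uncond_consts e" using K_in[OF basis ne] .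
lemma Kge: "uncond_const e \<ge> 1" using K_ge1[OF basis Kin] .

lemma tn_lim: "(\<lambda>n. tn e n y) \<longlonglongrightarrow> 0"
proof -
  have "(\<lambda>n. y - basis_proj e n y) \<longlonglongrightarrow> y - y"
    by (intro tendsto_diff tendsto_const coord_conv[OF basis])
  then show ?thesis unfolding tn_def using tendsto_norm_zero by force
qed

lemma th_range: "0 \<le> th e \<delta> n y" "th e \<delta> n y \<le> 1"
  unfolding th_def using phi_range[OF dpos] by auto

lemma small_zero: "tn e n y < \<delta> \<Longrightarrow> th e \<delta> n y = 0 \<and> phi1 \<delta> (tn e n y) = 0"
  unfolding th_def using phi_zero[OF dpos] phi1_zero[OF dpos] by auto

lemma local_fin: "\<exists>N \<rho>. \<rho> > 0 \<and> (\<forall>y\<in>ball x \<rho>. \<forall>n\<ge>N. tn e n y < \<delta>)"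
proof -
  define K where "K = uncond_const e"
  have K1: "K \<ge> 1" using Kge by (simp add: K_def)
  have "\<exists>N. \<forall>n\<ge>N. dist (tn e n x) 0 < \<delta>/2" using tn_lim[of x] dpos unfolding lim_sequentially by (meson half_gt_zero)
  then obtain N where "\<forall>n\<ge>N. dist (tn e n x) 0 < \<delta>/2" by blast
  then have N: "\<forall>n\<ge>N. tn e n x < \<delta>/2" by (simp add: tn_def dist_real_def)
  define \<rho> where "\<rho> = \<delta> / (2*K)"
  have rp: "\<rho> > 0" using K1 dpos by (simp add: \<rho>_def)
  have "tn e n y < \<delta>" if y: "y \<in> ball x \<rho>" and n: "n \<ge> N" for y n
  proof -
    have bl: "bounded_linear (\<lambda>y. y - basis_proj e n y)" using tailproj_bl[OF basis ne] .
    have eq: "y - basis_proj e n y = (x - basis_proj e n x) + ((y - x) - basis_proj e n (y - x))"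
      using linear_diff[OF bounded_linear.linear[OF proj_bl[OF basis ne, of n]], of y x] by (simp add: algebra_simps)
    have "tn e n y \<le> tn e n x + norm ((y - x) - basis_proj e n (y - x))"
      unfolding tn_def eq by (rule norm_triangle_ineq)
    also have "norm ((y - x) - basis_proj e n (y - x)) \<le> K * norm (y - x)"
      using tail_bound[OF basis Kin] by (simp add: K_def)
    also have "K * norm (y - x) < K * \<rho>" using y K1 by (simp add: dist_norm norm_minus_commute)
    also have "K * \<rho> = \<delta>/2" using K1 by (simp add: \<rho>_def)
    finally have "tn e n y < tn e n x + \<delta>/2" by simp
    moreover have "tn e n x < \<delta>/2" using N n by blast
    ultimately show ?thesis by linarith
  qed
  then show ?thesis using rp by blast
qed

lemma Psi_eq: assumes "\<forall>n\<ge>N. th e \<delta> n y = 0" shows "Psi e \<delta> y = GG e \<delta> N y"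
proof -
  have sub: "{n. th e \<delta> n y \<noteq> 0} \<subseteq> {..<N}" using assms by (auto simp: not_less[symmetric])
  show ?thesis unfolding Psi_def GG_def
    by (rule sum.mono_neutral_right[symmetric]) (use sub in auto)
qed

lemma th_C1: "C1_on UNIV (th e \<delta> n)"
proof -
  have "C1_on UNIV (\<lambda>y. phi \<delta> (norm (y - basis_proj e n y)))"
    by (rule comp_norm_C1(1)[OF tailproj_bl[OF basis ne] nC1 phi_deriv[OF dpos] phi1_cont[OF dpos]
          phi_zero[OF dpos] dpos])
  then show ?thesis unfolding th_def[abs_def] tn_def .
qed

lemma a_C1: "C1_on UNIV (\<lambda>y. phi1 \<delta> (tn e n y))"
proof -
  have "C1_on UNIV (\<lambda>y. phi1 \<delta> (norm (y - basis_proj e n y)))"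
    by (rule comp_norm_C1(1)[OF tailproj_bl[OF basis ne] nC1 phi1_deriv[OF dpos] phi2_cont[OF dpos]
          phi1_zero[OF dpos] dpos])
  then show ?thesis unfolding tn_def .
qed

lemma th_der: "(th e \<delta> n has_derivative
    (\<lambda>v. phi1 \<delta> (tn e n y) * frechet_derivative norm (at (y - basis_proj e n y)) (v - basis_proj e n v))) (at y)"
proof -
  have bl: "bounded_linear (\<lambda>y. y - basis_proj e n y)" using tailproj_bl[OF basis ne] .
  have "((\<lambda>y. phi \<delta> (norm (y - basis_proj e n y))) has_derivative
    (\<lambda>v. phi1 \<delta> (norm (y - basis_proj e n y)) * frechet_derivative norm (at (y - basis_proj e n y)) (v - basis_proj e n v))) (at y)"
    by (rule comp_norm_C1(2)[OF bl nC1 phi_deriv[OF dpos] phi1_cont[OF dpos] phi_zero[OF dpos] dpos])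
  then show ?thesis unfolding th_def[abs_def] tn_def .
qed

lemma coord_der: "((\<lambda>y. coord e y n) has_derivative (\<lambda>v. coord e v n)) (at y)"
  by (rule bounded_linear_imp_has_derivative[OF coord_bl[OF basis ne]])

lemma GG_der: "(GG e \<delta> N has_derivative DG e \<delta> N y) (at y)"
proof -
  have "((\<lambda>y. \<Sum>n<N. (th e \<delta> n y * coord e y n) *\<^sub>R e n) has_derivative
     (\<lambda>v. \<Sum>n<N. (phi1 \<delta> (tn e n y) * frechet_derivative norm (at (y - basis_proj e n y)) (v - basis_proj e n v)
                        * coord e y n + th e \<delta> n y * coord e v n) *\<^sub>R e n)) (at y)"
    by (rule has_derivative_sum, rule has_derivative_eq_rhs,
        rule has_derivative_scaleR[OF has_derivative_mult[OF th_der coord_der] has_derivative_const])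
       (simp add: algebra_simps)
  then show ?thesis unfolding GG_def[abs_def] DG_def[abs_def] .
qed

lemma GG_C1: "C1_on UNIV (GG e \<delta> N)"
  unfolding GG_def[abs_def]
  by (intro C1_sum finite_lessThan C1_linear_comp[OF bounded_linear_scaleR_left] C1_mult th_C1
        C1_linear coord_bl[OF basis ne])

lemma Psi_local: "\<exists>N \<rho>. \<rho> > 0 \<and> (\<forall>y\<in>ball x \<rho>. Psi e \<delta> y = GG e \<delta> N y \<and>
     (Psi e \<delta> has_derivative DG e \<delta> N y) (at y) \<and> (\<forall>n\<ge>N. phi1 \<delta> (tn e n y) = 0))"
proof -
  obtain N \<rho> where r: "\<rho> > 0" and loc: "\<forall>y\<in>ball x \<rho>. \<forall>n\<ge>N. tn e n y < \<delta>" using local_fin by blast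
  have eq: "Psi e \<delta> y = GG e \<delta> N y" if "y \<in> ball x \<rho>" for y
    using Psi_eq loc that small_zero by blast
  have "(Psi e \<delta> has_derivative DG e \<delta> N y) (at y)" if "y \<in> ball x \<rho>" for y
    by (rule has_derivative_transform_within_open[OF GG_der open_ball that]) (use eq in auto)
  then show ?thesis using r eq loc small_zero by blast
qed

lemma Psi_C1: "C1_on UNIV (Psi e \<delta>)"
proof (rule C1_local)
  fix x :: 'a
  obtain N \<rho> where r: "\<rho> > 0" and loc: "\<forall>y\<in>ball x \<rho>. Psi e \<delta> y = GG e \<delta> N y"
    using Psi_local by blast
  obtain G' where G': "\<forall>y\<in>UNIV. (GG e \<delta> N has_derivative blinfun_apply (G' y)) (at y)" "continuous_on UNIV G'"
    using GG_C1 unfolding C1_on_def by blast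
  have "(Psi e \<delta> has_derivative blinfun_apply (G' y)) (at y)" if "y \<in> ball x \<rho>" for y
    by (rule has_derivative_transform_within_open[OF _ open_ball that]) (use G' loc in auto)
  then show "\<exists>V f'. open V \<and> x \<in> V \<and> (\<forall>y\<in>V. (Psi e \<delta> has_derivative blinfun_apply (f' y)) (at y)) \<and> continuous_on V f'"
    using r G'(2) by (intro exI[of _ "ball x \<rho>"] exI[of _ G']) (auto intro: continuous_on_subset)
qed

end

lemma fin_lim: assumes "\<forall>j\<ge>N. g j = 0" shows "(\<lambda>L. \<Sum>j<L. g j) \<longlonglongrightarrow> (\<Sum>j<N. g j)"
proof (rule Lim_transform_eventually[OF tendsto_const])
  show "\<forall>\<^sub>F L in sequentially. (\<Sum>j<N. g j) = (\<Sum>j<L. g j)"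
    unfolding eventually_sequentially
    by (rule exI[of _ N], intro allI impI, rule sum.mono_neutral_left) (use assms in auto)
qed

context
  fixes e :: "nat \<Rightarrow> 'a::banach" and \<delta> :: real
  assumes basis: "schauder_basis e" and ne: "uncond_consts e \<noteq> {}"
    and nC1: "C1_on (UNIV - {0}) (norm :: 'a \<Rightarrow> real)" and dpos: "\<delta> > 0"
begin

lemma dn_bound: assumes "w \<noteq> 0" shows "\<bar>frechet_derivative norm (at w) h\<bar> \<le> norm (h::'a)"
proof -
  obtain N where N: "\<And>w::'a. w \<noteq> 0 \<Longrightarrow> (norm has_derivative blinfun_apply (N w)) (at w)"
    using nC1 unfolding C1_on_def by (metis Diff_iff UNIV_I singletonD)
  have "blinfun_apply (N w) = frechet_derivative norm (at w)" using frechet_derivative_at[OF N[OF assms]] .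
  then show ?thesis using dnorm_bound[OF N[OF assms]] by metis
qed

lemma T1_bound: "norm (\<Sum>n<N. (th e \<delta> n y * coord e v n) *\<^sub>R e n) \<le> uncond_const e * norm v"
proof -
  define \<mu> where "\<mu> j = (if j < N then th e \<delta> j y else 0)" for j
  have mu: "\<bar>\<mu> j\<bar> \<le> 1" for j using th_range[OF basis ne nC1 dpos] by (simp add: \<mu>_def)
  have "(\<lambda>L. \<Sum>j<L. (\<mu> j * (if 0 \<le> j then coord e v j else 0)) *\<^sub>R e j) \<longlonglongrightarrow>
        (\<Sum>j<N. (\<mu> j * (if 0 \<le> j then coord e v j else 0)) *\<^sub>R e j)"
    by (rule fin_lim) (simp add: \<mu>_def)
  from mult_lim[OF basis Kin[OF basis ne nC1 dpos] mu this]
  have "norm (\<Sum>j<N. (\<mu> j * (if 0 \<le> j then coord e v j else 0)) *\<^sub>R e j) \<le> uncond_const e * norm v"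
    by (simp add: proj0[OF basis])
  moreover have "(\<Sum>j<N. (\<mu> j * (if 0 \<le> j then coord e v j else 0)) *\<^sub>R e j) = (\<Sum>n<N. (th e \<delta> n y * coord e v n) *\<^sub>R e n)"
    by (intro sum.cong) (auto simp: \<mu>_def)
  ultimately show ?thesis by simp
qed

lemma T2_bound:
  "norm (\<Sum>n<N. (phi1 \<delta> (tn e n y) * frechet_derivative norm (at (y - basis_proj e n y)) (v - basis_proj e n v)
          * coord e y n) *\<^sub>R e n) \<le> 4 * (uncond_const e)^2 * norm v"
proof -
  define K where "K = uncond_const e"
  have Kin': "K \<in> uncond_consts e" using Kin[OF basis ne nC1 dpos] by (simp add: K_def)
  have K1: "K \<ge> 1" using Kge[OF basis ne nC1 dpos] by (simp add: K_def)
  define c where "c n = phi1 \<delta> (tn e n y) * frechet_derivative norm (at (y - basis_proj e n y)) (v - basis_proj e n v)" for n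
  define A where "A = 2/\<delta> * (K * norm v)"
  have A0: "A \<ge> 0" using K1 dpos by (simp add: A_def)
  have cb: "\<bar>c n\<bar> \<le> A" for n
  proof (cases "phi1 \<delta> (tn e n y) = 0")
    case True then show ?thesis using A0 by (simp add: c_def)
  next
    case False
    then have "tn e n y > \<delta>" by (auto simp: phi1_def split: if_splits)
    then have w: "y - basis_proj e n y \<noteq> 0" using dpos by (auto simp: tn_def)
    have "\<bar>frechet_derivative norm (at (y - basis_proj e n y)) (v - basis_proj e n v)\<bar> \<le> K * norm v"
      using dn_bound[OF w] tail_bound[OF basis Kin'] order_trans by blast
    moreover have "\<bar>phi1 \<delta> (tn e n y)\<bar> \<le> 2/\<delta>" using phi1_bound[OF dpos] .
    ultimately show ?thesis unfolding c_def A_def abs_mult by (intro mult_mono) (use dpos in auto)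
  qed
  let ?T = "\<Sum>n<N. (c n * coord e y n) *\<^sub>R e n"
  have "norm ?T \<le> 4 * K^2 * norm v"
  proof (cases "\<exists>n<N. phi1 \<delta> (tn e n y) \<noteq> 0")
    case False
    then have "?T = 0" by (simp add: c_def)
    then show ?thesis by simp
  next
    case True
    define m where "m = (LEAST n. n < N \<and> phi1 \<delta> (tn e n y) \<noteq> 0)"
    have mN: "m < N \<and> phi1 \<delta> (tn e m y) \<noteq> 0" using True unfolding m_def by (metis (mono_tags, lifting) LeastI)
    have tm: "tn e m y < 2*\<delta>" using phi1_nz[OF dpos] mN by blast
    have cz: "c j = 0" if "j < m" for j
    proof -
      have "\<not> (j < N \<and> phi1 \<delta> (tn e j y) \<noteq> 0)" using not_less_Least[OF that[unfolded m_def]] .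
      then show ?thesis using that mN by (auto simp: c_def)
    qed
    show ?thesis
    proof (cases "A = 0")
      case True
      then have "c n = 0" for n using cb[of n] by simp
      then show ?thesis by simp
    next
      case False
      then have Ap: "A > 0" using A0 by simp
      define \<mu> where "\<mu> j = (if j < N then c j / A else 0)" for j
      have mu: "\<bar>\<mu> j\<bar> \<le> 1" for j using cb[of j] Ap by (simp add: \<mu>_def abs_divide divide_le_eq)
      have "(\<lambda>L. \<Sum>j<L. (\<mu> j * (if m \<le> j then coord e y j else 0)) *\<^sub>R e j) \<longlonglongrightarrow>
            (\<Sum>j<N. (\<mu> j * (if m \<le> j then coord e y j else 0)) *\<^sub>R e j)"
        by (rule fin_lim) (simp add: \<mu>_def)
      from mult_lim[OF basis Kin' mu this]
      have z: "norm (\<Sum>j<N. (\<mu> j * (if m \<le> j then coord e y j else 0)) *\<^sub>R e j) \<le> K * tn e m y"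
        by (simp add: tn_def)
      have "(\<Sum>j<N. (\<mu> j * (if m \<le> j then coord e y j else 0)) *\<^sub>R e j) = (1/A) *\<^sub>R ?T"
        unfolding scaleR_sum_right by (intro sum.cong) (auto simp: \<mu>_def cz not_le)
      with z have "norm ?T / A \<le> K * tn e m y" using Ap by simp
      then have "norm ?T \<le> A * (K * tn e m y)" using Ap by (simp add: divide_le_eq mult.commute)
      also have "\<dots> \<le> A * (K * (2*\<delta>))" using tm K1 Ap by (intro mult_left_mono) auto
      also have "\<dots> = 4 * K^2 * norm v" using dpos by (simp add: A_def power2_eq_square)
      finally show ?thesis .
    qed
  qed
  then show ?thesis by (simp add: K_def c_def)
qed

lemma DG_bound: "norm (DG e \<delta> N y v) \<le> 5 * (uncond_const e)^2 * norm v"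
proof -
  have K1: "uncond_const e \<ge> 1" using Kge[OF basis ne nC1 dpos] .
  have deq: "DG e \<delta> N y v = (\<Sum>n<N. (phi1 \<delta> (tn e n y) * frechet_derivative norm (at (y - basis_proj e n y)) (v - basis_proj e n v)
          * coord e y n) *\<^sub>R e n) + (\<Sum>n<N. (th e \<delta> n y * coord e v n) *\<^sub>R e n)"
    unfolding DG_def by (simp add: scaleR_add_left sum.distrib)
  have "norm ((\<Sum>n<N. (phi1 \<delta> (tn e n y) * frechet_derivative norm (at (y - basis_proj e n y)) (v - basis_proj e n v)
          * coord e y n) *\<^sub>R e n) + (\<Sum>n<N. (th e \<delta> n y * coord e v n) *\<^sub>R e n)) \<le>
      norm (\<Sum>n<N. (phi1 \<delta> (tn e n y) * frechet_derivative norm (at (y - basis_proj e n y)) (v - basis_proj e n v)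
          * coord e y n) *\<^sub>R e n) + norm (\<Sum>n<N. (th e \<delta> n y * coord e v n) *\<^sub>R e n)"
    by (rule norm_triangle_ineq)
  then have "norm (DG e \<delta> N y v) \<le> 4 * (uncond_const e)^2 * norm v + uncond_const e * norm v"
    unfolding deq using T1_bound[where N=N and y=y and v=v] T2_bound[where N=N and y=y and v=v] by linarith
  also have "uncond_const e * norm v \<le> (uncond_const e)^2 * norm v"
    using K1 by (intro mult_right_mono) (auto simp: power2_eq_square)
  finally show ?thesis by (simp add: algebra_simps)
qed

lemma Psi_close: "norm (y - Psi e \<delta> y) \<le> 2 * uncond_const e * \<delta>"
proof -
  define K where "K = uncond_const e"
  have Kin': "K \<in> uncond_consts e" using Kin[OF basis ne nC1 dpos] by (simp add: K_def)
  have K1: "K \<ge> 1" using Kge[OF basis ne nC1 dpos] by (simp add: K_def)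
  obtain N \<rho> where r: "\<rho> > 0" and loc: "\<forall>z\<in>ball y \<rho>. \<forall>n\<ge>N. tn e n z < \<delta>"
    using local_fin[OF basis ne nC1 dpos] by blast
  have thz: "\<forall>n\<ge>N. th e \<delta> n y = 0" using loc r small_zero[OF basis ne nC1 dpos] by simp
  have PsiN: "Psi e \<delta> y = (\<Sum>j<N. (th e \<delta> j y * coord e y j) *\<^sub>R e j)"
    using Psi_eq[OF basis ne nC1 dpos thz] by (simp add: GG_def)
  have ex: "\<exists>n. th e \<delta> n y < 1" using thz by (metis le_refl zero_less_one)
  define m where "m = (LEAST n. th e \<delta> n y < 1)"
  have thm1: "th e \<delta> m y < 1" using ex unfolding m_def by (rule LeastI_ex)
  have tm: "tn e m y < 2*\<delta>" using phi_lt1[OF dpos] thm1 by (simp add: th_def)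
  have th1: "th e \<delta> j y = 1" if "j < m" for j
    using not_less_Least[OF that[unfolded m_def]] th_range[OF basis ne nC1 dpos, of j y] by simp
  define \<mu> where "\<mu> j = 1 - th e \<delta> j y" for j
  have mu: "\<bar>\<mu> j\<bar> \<le> 1" for j using th_range[OF basis ne nC1 dpos, of j y] by (simp add: \<mu>_def)
  have lim: "(\<lambda>L. \<Sum>j<L. (\<mu> j * (if m \<le> j then coord e y j else 0)) *\<^sub>R e j) \<longlonglongrightarrow> y - Psi e \<delta> y"
  proof (rule Lim_transform_eventually)
    show "(\<lambda>L. basis_proj e L y - Psi e \<delta> y) \<longlonglongrightarrow> y - Psi e \<delta> y"
      by (intro tendsto_diff tendsto_const coord_conv[OF basis])
    show "\<forall>\<^sub>F L in sequentially. basis_proj e L y - Psi e \<delta> y =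
        (\<Sum>j<L. (\<mu> j * (if m \<le> j then coord e y j else 0)) *\<^sub>R e j)"
      unfolding eventually_sequentially
    proof (intro exI[of _ N] allI impI)
      fix L assume L: "N \<le> L"
      have "Psi e \<delta> y = (\<Sum>j<L. (th e \<delta> j y * coord e y j) *\<^sub>R e j)"
        unfolding PsiN by (rule sum.mono_neutral_left) (use L thz in auto)
      then have "basis_proj e L y - Psi e \<delta> y = (\<Sum>j<L. ((1 - th e \<delta> j y) * coord e y j) *\<^sub>R e j)"
        by (simp add: basis_proj_def sum_subtractf[symmetric] algebra_simps)
      also have "\<dots> = (\<Sum>j<L. (\<mu> j * (if m \<le> j then coord e y j else 0)) *\<^sub>R e j)"
        by (intro sum.cong) (auto simp: \<mu>_def th1 not_le)
      finally show "basis_proj e L y - Psi e \<delta> y = (\<Sum>j<L. (\<mu> j * (if m \<le> j then coord e y j else 0)) *\<^sub>R e j)" .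
    qed
  qed
  from mult_lim[OF basis Kin' mu lim] have "norm (y - Psi e \<delta> y) \<le> K * tn e m y" by (simp add: tn_def)
  also have "\<dots> \<le> K * (2 * \<delta>)" using tm K1 by (intro mult_left_mono) auto
  finally show ?thesis by (simp add: K_def)
qed

end

theorem lemma3p3:
  fixes e :: "nat \<Rightarrow> 'a::banach"
    and U :: "'a set"
    and f1 :: "'a \<Rightarrow> 'b::banach"
    and z0 :: 'a and r0 \<epsilon> \<eta> :: real
  assumes inf_dim: "\<not> (\<exists>B. finite B \<and> span B = (UNIV :: 'a set))"
    and basis: "schauder_basis e"
    and uncond: "uncond_consts e \<noteq> {}"
    and smooth_norm: "C1_on (UNIV - {0}) (norm :: 'a \<Rightarrow> real)"
    and U_open: "open U"
    and r0_pos: "r0 > 0"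
    and ball_sub: "ball z0 (2 * r0) \<subseteq> U"
    and f1_C1: "C1_on U f1"
    and eps_pos: "\<epsilon> > 0" and eta_pos: "\<eta> > 0"
    and deriv_small: "\<exists>c < \<eta>. \<forall>x\<in>ball z0 (2 * r0). onorm (frechet_derivative f1 (at x)) \<le> c"
  shows "\<exists>\<Psi> :: 'a \<Rightarrow> 'a. C1_on UNIV \<Psi> \<and> \<Psi> ` ball z0 r0 \<subseteq> U \<and>
     (\<exists>c < \<epsilon>. \<forall>x\<in>ball z0 r0. norm (f1 x - (f1 \<circ> \<Psi>) x) \<le> c) \<and>
     (\<exists>c < 8 * (uncond_const e)\<^sup>2 * \<eta>.
        \<forall>x\<in>ball z0 r0. onorm (frechet_derivative (f1 \<circ> \<Psi>) (at x)) \<le> c) \<and>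
     (\<forall>x. \<exists>(n0::nat) V0 (\<xi>::nat \<Rightarrow> 'a \<Rightarrow> real) (a::nat \<Rightarrow> 'a \<Rightarrow> real).
        open V0 \<and> x \<in> V0 \<and> (\<forall>n<n0. C1_on V0 (\<xi> n) \<and> C1_on V0 (a n)) \<and>
        (\<forall>y\<in>V0. \<forall>v. frechet_derivative \<Psi> (at y) v =
           (\<Sum>n<n0. (a n y * frechet_derivative norm (at (y - basis_proj e n y)) (v - basis_proj e n v)
                        * coord e y n + \<xi> n y * coord e v n) *\<^sub>R e n)))"
proof -
  define K where "K = uncond_const e"
  have Kin': "K \<in> uncond_consts e" using K_in[OF basis uncond] by (simp add: K_def)
  have K1: "K \<ge> 1" using K_ge1[OF basis Kin'] .
  obtain c where cl: "c < \<eta>" and cb: "\<forall>x\<in>ball z0 (2 * r0). onorm (frechet_derivative f1 (at x)) \<le> c"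
    using deriv_small by blast
  define c' where "c' = max c 0"
  have c'l: "c' < \<eta>" and c'0: "c' \<ge> 0" using cl eta_pos by (auto simp: c'_def)
  have cb': "onorm (frechet_derivative f1 (at x)) \<le> c'" if "x \<in> ball z0 (2 * r0)" for x
  proof -
    have "onorm (frechet_derivative f1 (at x)) \<le> c" using cb that by blast
    then show ?thesis by (simp add: c'_def)
  qed
  define m where "m = min r0 (\<epsilon>/\<eta>)"
  have m0: "m > 0" using r0_pos eps_pos eta_pos by (simp add: m_def)
  define \<delta> where "\<delta> = m / (4*K)"
  have dpos: "\<delta> > 0" using m0 K1 by (simp add: \<delta>_def)
  have d2: "2*K*\<delta> = m/2" using K1 by (simp add: \<delta>_def)
  have d2r: "2*K*\<delta> < r0" using d2 m0 r0_pos by (simp add: m_def)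
  have "c' * m \<le> \<eta> * (\<epsilon>/\<eta>)" using c'l c'0 m0 by (intro mult_mono) (auto simp: m_def)
  then have "c' * m \<le> \<epsilon>" using eta_pos by simp
  moreover have "c' * (2*K*\<delta>) = (c' * m)/2" using d2 by simp
  ultimately have d3: "c' * (2*K*\<delta>) < \<epsilon>" using eps_pos by linarith
  define \<Psi> where "\<Psi> = Psi e \<delta>"
  note ctx = basis uncond smooth_norm dpos
  have close: "norm (y - \<Psi> y) \<le> 2*K*\<delta>" for y
    using Psi_close[OF ctx, of y] by (simp add: \<Psi>_def K_def)
  have inball: "\<Psi> x \<in> ball z0 (2*r0)" if "x \<in> ball z0 r0" for x
  proof -
    have "dist z0 (\<Psi> x) \<le> dist z0 x + dist x (\<Psi> x)" by (rule dist_triangle)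
    also have "dist x (\<Psi> x) \<le> 2*K*\<delta>" using close by (simp add: dist_norm)
    finally show ?thesis using that d2r by simp
  qed
  have ballU: "ball z0 (2*r0) \<subseteq> U" using ball_sub by simp
  obtain F1 where F1: "\<forall>x\<in>U. (f1 has_derivative blinfun_apply (F1 x)) (at x)"
    using f1_C1 unfolding C1_on_def by blast
  have fd: "frechet_derivative f1 (at x) = blinfun_apply (F1 x)" if "x \<in> U" for x
    using frechet_derivative_at[OF F1[rule_format, OF that]] by simp
  have f1d: "(f1 has_derivative frechet_derivative f1 (at x)) (at x)" if "x \<in> U" for x
    using F1 fd that by simp
  show ?thesis
  proof (intro exI[of _ \<Psi>] conjI)
    show "C1_on UNIV \<Psi>" unfolding \<Psi>_def by (rule Psi_C1[OF ctx])
    show "\<Psi> ` ball z0 r0 \<subseteq> U" using inball ballU by blast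
    show "\<exists>c<\<epsilon>. \<forall>x\<in>ball z0 r0. norm (f1 x - (f1 \<circ> \<Psi>) x) \<le> c"
    proof (intro exI[of _ "c' * (2*K*\<delta>)"] conjI ballI)
      show "c' * (2*K*\<delta>) < \<epsilon>" by (rule d3)
      fix x assume x: "x \<in> ball z0 r0"
      have xin: "x \<in> ball z0 (2*r0)" using x r0_pos by simp
      have "norm (f1 x - f1 (\<Psi> x)) \<le> c' * norm (x - \<Psi> x)"
      proof (rule differentiable_bound[OF convex_ball _ cb' xin inball[OF x]])
        fix y assume y: "y \<in> ball z0 (2*r0)"
        then have "y \<in> U" using ballU by blast
        then show "(f1 has_derivative frechet_derivative f1 (at y)) (at y within ball z0 (2*r0))"
          using f1d has_derivative_at_withinI by blast
      qed
      also have "\<dots> \<le> c' * (2*K*\<delta>)" using close c'0 by (intro mult_left_mono) auto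
      finally show "norm (f1 x - (f1 \<circ> \<Psi>) x) \<le> c' * (2*K*\<delta>)" by simp
    qed
    show "\<exists>c < 8 * (uncond_const e)\<^sup>2 * \<eta>.
        \<forall>x\<in>ball z0 r0. onorm (frechet_derivative (f1 \<circ> \<Psi>) (at x)) \<le> c"
    proof (intro exI[of _ "c' * (5*K^2)"] conjI ballI)
      have "c' * (5*K^2) < \<eta> * (5*K^2)" using c'l K1 by (intro mult_strict_right_mono) auto
      also have "\<dots> \<le> 8 * K^2 * \<eta>" using eta_pos by simp
      finally show "c' * (5*K^2) < 8 * (uncond_const e)\<^sup>2 * \<eta>" by (simp add: K_def)
      fix x assume x: "x \<in> ball z0 r0"
      obtain N \<rho> where r: "\<rho> > 0" and loc: "\<forall>y\<in>ball x \<rho>. Psi e \<delta> y = GG e \<delta> N y \<and>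
           (Psi e \<delta> has_derivative DG e \<delta> N y) (at y) \<and> (\<forall>n\<ge>N. phi1 \<delta> (tn e n y) = 0)"
        using Psi_local[OF ctx, of x] by blast
      have dP: "(\<Psi> has_derivative DG e \<delta> N x) (at x)" using loc r by (simp add: \<Psi>_def)
      have PU: "\<Psi> x \<in> U" using inball[OF x] ballU by blast
      have dF: "(f1 has_derivative blinfun_apply (F1 (\<Psi> x))) (at (\<Psi> x))" using F1 PU by blast
      have "((f1 \<circ> \<Psi>) has_derivative (blinfun_apply (F1 (\<Psi> x)) \<circ> DG e \<delta> N x)) (at x)"
        by (rule diff_chain_at[OF dP dF])
      then have eq: "frechet_derivative (f1 \<circ> \<Psi>) (at x) = blinfun_apply (F1 (\<Psi> x)) \<circ> DG e \<delta> N x"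
        using frechet_derivative_at by metis
      have blD: "bounded_linear (DG e \<delta> N x)" using has_derivative_bounded_linear[OF dP] .
      have o1: "onorm (blinfun_apply (F1 (\<Psi> x))) \<le> c'" using cb'[OF inball[OF x]] fd[OF PU] by simp
      have o2: "onorm (DG e \<delta> N x) \<le> 5*K^2"
        by (rule onorm_bound) (use DG_bound[OF ctx] in \<open>auto simp: K_def\<close>)
      have "onorm (frechet_derivative (f1 \<circ> \<Psi>) (at x)) \<le> onorm (blinfun_apply (F1 (\<Psi> x))) * onorm (DG e \<delta> N x)"
        unfolding eq by (rule onorm_compose[OF blinfun.bounded_linear_right blD])
      also have "\<dots> \<le> c' * (5*K^2)"
        using o1 o2 c'0 blD by (intro mult_mono onorm_pos_le blinfun.bounded_linear_right) auto
      finally show "onorm (frechet_derivative (f1 \<circ> \<Psi>) (at x)) \<le> c' * (5*K^2)" .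
    qed
    show "\<forall>x. \<exists>(n0::nat) V0 (\<xi>::nat \<Rightarrow> 'a \<Rightarrow> real) (a::nat \<Rightarrow> 'a \<Rightarrow> real).
        open V0 \<and> x \<in> V0 \<and> (\<forall>n<n0. C1_on V0 (\<xi> n) \<and> C1_on V0 (a n)) \<and>
        (\<forall>y\<in>V0. \<forall>v. frechet_derivative \<Psi> (at y) v =
           (\<Sum>n<n0. (a n y * frechet_derivative norm (at (y - basis_proj e n y)) (v - basis_proj e n v)
                        * coord e y n + \<xi> n y * coord e v n) *\<^sub>R e n))"
    proof
      fix x :: 'a
      obtain N \<rho> where r: "\<rho> > 0" and loc: "\<forall>y\<in>ball x \<rho>. Psi e \<delta> y = GG e \<delta> N y \<and>
           (Psi e \<delta> has_derivative DG e \<delta> N y) (at y) \<and> (\<forall>n\<ge>N. phi1 \<delta> (tn e n y) = 0)"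
        using Psi_local[OF ctx, of x] by blast
      have fdP: "frechet_derivative \<Psi> (at y) v = DG e \<delta> N y v" if "y \<in> ball x \<rho>" for y v
        using frechet_derivative_at[of \<Psi> "DG e \<delta> N y" y] loc that by (simp add: \<Psi>_def)
      show "\<exists>(n0::nat) V0 (\<xi>::nat \<Rightarrow> 'a \<Rightarrow> real) (a::nat \<Rightarrow> 'a \<Rightarrow> real).
        open V0 \<and> x \<in> V0 \<and> (\<forall>n<n0. C1_on V0 (\<xi> n) \<and> C1_on V0 (a n)) \<and>
        (\<forall>y\<in>V0. \<forall>v. frechet_derivative \<Psi> (at y) v =
           (\<Sum>n<n0. (a n y * frechet_derivative norm (at (y - basis_proj e n y)) (v - basis_proj e n v)
                        * coord e y n + \<xi> n y * coord e v n) *\<^sub>R e n))"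
        apply (rule exI[of _ N], rule exI[of _ "ball x \<rho>"], rule exI[of _ "th e \<delta>"],
               rule exI[of _ "\<lambda>n y. phi1 \<delta> (tn e n y)"])
        using r fdP C1_sub[OF th_C1[OF ctx]] C1_sub[OF a_C1[OF ctx]] by (auto simp: DG_def)
    qed
  qed
qed

end
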